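(* Let $n\ge1$, $s\in(0,1)$. There exists $\delta\in(0,1/10)$, depending on $n$ and $s$, such that for all disjoint measurable $A,B\subset\mathbb{R}^n$ with $|A|=1$ and $|B|\le\delta$, setting $D:=\mathbb{R}^n\setminus(A\cup B)$, $$L(A,D)\ge\begin{cases}\delta & \text{if } s\in(0,1/2),\\ \delta\log(1/|B|) & \text{if } s=1/2,\\ \delta\,|B|^{1-2s} & \text{if } s\in(1/2,1).\end{cases}$$
   Context: For measurable $A,D\subset\mathbb{R}^n$, $L(A,D):=\int_A\int_D\frac{dx\,dy}{|x-y|^{n+2s}}$; $|\cdot|$ is Lebesgue measure. *)

theory Defs
  imports "HOL-Analysis.Analysis"
begin

definition Lint :: "real \<Rightarrow> (real^'n) set \<Rightarrow> (real^'n) set \<Rightarrow> ennreal" where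
  "Lint s A D = (\<integral>\<^sup>+ x. (\<integral>\<^sup>+ y. indicator A x * indicator D y *
       ennreal (1 / norm (x - y) powr (real CARD('n) + 2 * s)) \<partial>lebesgue) \<partial>lebesgue)"

text \<open>Right-hand side of the lower bound, with b = |B| (extended). Convention:
  for |B| = 0, log(1/|B|) = +infinity and |B|^(1-2s) = +infinity when s > 1/2.\<close>
definition lower_bound :: "real \<Rightarrow> real \<Rightarrow> ennreal \<Rightarrow> ennreal" where
  "lower_bound s \<delta> b =
     (if s < 1/2 then ennreal \<delta>
      else if s = 1/2 then (if b = 0 then \<infinity> else ennreal (\<delta> * ln (1 / enn2real b)))
      else (if b = 0 then \<infinity> else ennreal (\<delta> * enn2real b powr (1 - 2 * s))))"

end

theory Submission
  imports Defs
begin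

lemma nn_integral_lborel_affine:
  fixes t :: "'a::euclidean_space"
  assumes [measurable]: "f \<in> borel_measurable borel" and c: "c \<noteq> 0"
  shows "(\<integral>\<^sup>+x. f x \<partial>lborel) = ennreal (\<bar>c\<bar>^DIM('a)) * (\<integral>\<^sup>+x. f (t + c *\<^sub>R x) \<partial>lborel)"
  by (subst lborel_affine[OF c, of t])
     (simp add: nn_integral_density nn_integral_distr nn_integral_cmult)

lemma trans_inv:
  fixes h :: "'a::euclidean_space"
  assumes [measurable]: "f \<in> borel_measurable borel"
  shows "(\<integral>\<^sup>+x. f (x - h) \<partial>lborel) = (\<integral>\<^sup>+x. f x \<partial>lborel)"
  using nn_integral_lborel_affine[OF assms, of 1 "-h"] by (simp add: algebra_simps)

lemma refl_inv:
  fixes x :: "'a::euclidean_space"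
  assumes [measurable]: "f \<in> borel_measurable borel"
  shows "(\<integral>\<^sup>+h. f (x - h) \<partial>lborel) = (\<integral>\<^sup>+h. f h \<partial>lborel)"
  using nn_integral_lborel_affine[OF assms, of "-1" x] by (simp add: algebra_simps)

definition Fo :: "'a::euclidean_space set \<Rightarrow> 'a set \<Rightarrow> 'a \<Rightarrow> ennreal" where
  "Fo A D h = (\<integral>\<^sup>+x. indicator A x * indicator D (x - h) \<partial>lborel)"

lemma Fo_meas[measurable]:
  assumes [measurable]: "A \<in> sets borel" "D \<in> sets borel"
  shows "Fo A D \<in> borel_measurable borel"
  unfolding Fo_def by measurable

lemma Fo_sub:
  fixes A :: "'a::euclidean_space set"
  assumes [measurable]: "A \<in> sets borel"
  shows "Fo A (-A) (h1 + h2) \<le> Fo A (-A) h1 + Fo A (-A) h2"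
proof -
  have "Fo A (-A) (h1+h2) \<le> (\<integral>\<^sup>+x. indicator A x * indicator (-A) (x-h1) + indicator A (x-h1) * indicator (-A) (x - h1 - h2) \<partial>lborel)"
    unfolding Fo_def by (rule nn_integral_mono) (auto simp: algebra_simps split: split_indicator)
  also have "\<dots> = Fo A (-A) h1 + (\<integral>\<^sup>+x. indicator A (x-h1) * indicator (-A) (x - h1 - h2) \<partial>lborel)"
    unfolding Fo_def by (rule nn_integral_add) measurable
  also have "(\<integral>\<^sup>+x. indicator A (x-h1) * indicator (-A) (x - h1 - h2) \<partial>lborel) = Fo A (-A) h2"
    unfolding Fo_def
    using trans_inv[of "\<lambda>y. indicator A y * indicator (-A) (y - h2) :: ennreal" h1] by simp
  finally show ?thesis .
qed

lemma Fo_zero: "Fo A (-A) 0 = 0"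
proof -
  have "(\<lambda>x. indicator A x * indicator (-A) x) = (\<lambda>x. 0::ennreal)"
    by (auto split: split_indicator)
  then show ?thesis unfolding Fo_def diff_zero by simp
qed

lemma Fo_mult:
  fixes A :: "'a::euclidean_space set"
  assumes [measurable]: "A \<in> sets borel"
  shows "Fo A (-A) (real m *\<^sub>R h) \<le> of_nat m * Fo A (-A) h"
proof (induction m)
  case 0
  then show ?case by (simp add: Fo_zero)
next
  case (Suc m)
  have "Fo A (-A) (real (Suc m) *\<^sub>R h) = Fo A (-A) (h + real m *\<^sub>R h)"
    by (simp add: algebra_simps)
  also have "\<dots> \<le> Fo A (-A) h + Fo A (-A) (real m *\<^sub>R h)" by (rule Fo_sub) simp
  also have "\<dots> \<le> Fo A (-A) h + of_nat m * Fo A (-A) h" using Suc by (intro add_left_mono)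
  also have "\<dots> = of_nat (Suc m) * Fo A (-A) h" by (simp add: algebra_simps)
  finally show ?case .
qed

lemma Fo_GP:
  fixes A :: "'a::euclidean_space set"
  assumes [measurable]: "A \<in> sets borel"
  shows "Fo A (-A) h + Fo A A h = emeasure lborel A"
proof -
  have "Fo A (-A) h + Fo A A h = (\<integral>\<^sup>+x. indicator A x * indicator (-A) (x-h) + indicator A x * indicator A (x-h) \<partial>lborel)"
    unfolding Fo_def by (rule nn_integral_add[symmetric]) measurable
  also have "\<dots> = (\<integral>\<^sup>+x. indicator A x \<partial>lborel)"
    by (rule nn_integral_cong) (auto split: split_indicator)
  finally show ?thesis by simp
qed

lemma Fo_P_total:
  fixes A :: "'a::euclidean_space set"
  assumes [measurable]: "A \<in> sets borel"
  shows "(\<integral>\<^sup>+h. Fo A A h \<partial>lborel) = emeasure lborel A * emeasure lborel A"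
proof -
  have "(\<integral>\<^sup>+h. Fo A A h \<partial>lborel) = (\<integral>\<^sup>+x. (\<integral>\<^sup>+h. indicator A x * indicator A (x - h) \<partial>lborel) \<partial>lborel)"
    unfolding Fo_def by (rule lborel_pair.Fubini') measurable
  also have "\<dots> = (\<integral>\<^sup>+x. indicator A x * emeasure lborel A \<partial>lborel)"
  proof (rule nn_integral_cong)
    fix x :: 'a
    have "(\<integral>\<^sup>+h. indicator A x * indicator A (x - h) \<partial>lborel) = indicator A x * (\<integral>\<^sup>+h. indicator A (x - h) \<partial>lborel)"
      by (rule nn_integral_cmult) measurable
    also have "\<dots> = indicator A x * emeasure lborel A"
      using refl_inv[of "indicator A :: 'a \<Rightarrow> ennreal" x] by simp
    finally show "(\<integral>\<^sup>+h. indicator A x * indicator A (x - h) \<partial>lborel) = indicator A x * emeasure lborel A" .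
  qed
  also have "\<dots> = emeasure lborel A * emeasure lborel A"
    by (simp add: nn_integral_multc)
  finally show ?thesis .
qed

lemma Fo_GF:
  fixes A :: "'a::euclidean_space set"
  assumes [measurable]: "A \<in> sets borel" "B \<in> sets borel"
  shows "Fo A (-A) h \<le> Fo A (UNIV - (A \<union> B)) h + emeasure lborel B"
proof -
  have "Fo A (-A) h \<le> (\<integral>\<^sup>+x. indicator A x * indicator (UNIV - (A \<union> B)) (x-h) + indicator B (x - h) \<partial>lborel)"
    unfolding Fo_def by (rule nn_integral_mono) (auto split: split_indicator)
  also have "\<dots> = Fo A (UNIV - (A \<union> B)) h + (\<integral>\<^sup>+x. indicator B (x - h) \<partial>lborel)"
    unfolding Fo_def by (rule nn_integral_add) measurable
  also have "(\<integral>\<^sup>+x. indicator B (x - h) \<partial>lborel) = emeasure lborel B"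
    using trans_inv[of "indicator B :: 'a \<Rightarrow> ennreal" h] by simp
  finally show ?thesis .
qed

definition Lb :: "real \<Rightarrow> 'a::euclidean_space set \<Rightarrow> 'a set \<Rightarrow> ennreal" where
  "Lb p A D = (\<integral>\<^sup>+x. (\<integral>\<^sup>+y. indicator A x * indicator D y * ennreal (1 / norm (x - y) powr p) \<partial>lborel) \<partial>lborel)"

lemma Lb_eq:
  fixes A :: "'a::euclidean_space set"
  assumes [measurable]: "A \<in> sets borel" "D \<in> sets borel"
  shows "Lb p A D = (\<integral>\<^sup>+h. ennreal (1 / norm h powr p) * Fo A D h \<partial>lborel)"
proof -
  have "Lb p A D = (\<integral>\<^sup>+x. (\<integral>\<^sup>+h. indicator A x * indicator D (x - h) * ennreal (1 / norm h powr p) \<partial>lborel) \<partial>lborel)"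
    unfolding Lb_def
  proof (rule nn_integral_cong)
    fix x :: 'a
    show "(\<integral>\<^sup>+y. indicator A x * indicator D y * ennreal (1 / norm (x - y) powr p) \<partial>lborel) =
      (\<integral>\<^sup>+h. indicator A x * indicator D (x - h) * ennreal (1 / norm h powr p) \<partial>lborel)"
      using refl_inv[of "\<lambda>y. indicator A x * indicator D y * ennreal (1 / norm (x - y) powr p)" x] by simp
  qed
  also have "\<dots> = (\<integral>\<^sup>+h. (\<integral>\<^sup>+x. indicator A x * indicator D (x - h) * ennreal (1 / norm h powr p) \<partial>lborel) \<partial>lborel)"
    by (rule lborel_pair.Fubini'[symmetric]) measurable
  also have "\<dots> = (\<integral>\<^sup>+h. ennreal (1 / norm h powr p) * Fo A D h \<partial>lborel)"
    unfolding Fo_def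
    by (rule nn_integral_cong, subst nn_integral_cmult[symmetric]) (measurable, simp add: mult_ac)
  finally show ?thesis .
qed


definition Sh :: "real \<Rightarrow> 'a::euclidean_space set" where
  "Sh r = cball 0 r - cball 0 (r/2)"

lemma Sh_borel[measurable]: "Sh r \<in> sets borel"
  unfolding Sh_def by measurable

lemma emeasure_Sh:
  assumes "r \<ge> 0"
  shows "emeasure lborel (Sh r :: 'a::euclidean_space set) =
    ennreal (unit_ball_vol (DIM('a)) * (r ^ DIM('a) - (r/2) ^ DIM('a)))"
proof -
  have sub: "cball 0 (r/2) \<subseteq> (cball 0 r :: 'a set)" using assms by auto
  have "emeasure lborel (Sh r :: 'a set) = emeasure lborel (cball 0 r :: 'a set) - emeasure lborel (cball 0 (r/2) :: 'a set)"
    unfolding Sh_def using sub assms by (intro emeasure_Diff) (auto simp: emeasure_cball)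
  also have "\<dots> = ennreal (unit_ball_vol (DIM('a)) * r ^ DIM('a)) - ennreal (unit_ball_vol (DIM('a)) * (r/2) ^ DIM('a))"
    using assms by (simp add: emeasure_cball)
  also have "\<dots> = ennreal (unit_ball_vol (DIM('a)) * (r ^ DIM('a) - (r/2) ^ DIM('a)))"
    using assms by (subst ennreal_minus) (auto simp: algebra_simps)
  finally show ?thesis .
qed

lemma Sh_scale:
  assumes "m > 0"
  shows "indicator (Sh R) (m *\<^sub>R x) = (indicator (Sh (R/m) :: 'a::euclidean_space set) x :: ennreal)"
  using assms unfolding Sh_def
  by (auto split: split_indicator simp: field_simps)

lemma ennreal_ge_aux:
  assumes "ennreal a \<le> X + ennreal c" "0 \<le> c"
  shows "ennreal (a - c) \<le> X"
proof (cases X)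
  case (real x)
  with assms have "ennreal a \<le> ennreal (x + c)" by (metis ennreal_plus)
  then have "a \<le> x + c" using real assms by (subst (asm) ennreal_le_iff) auto
  then show ?thesis using real by (auto intro!: ennreal_leI)
qed simp


lemma ennreal_div_aux:
  assumes "ennreal a \<le> ennreal M * X" "M > 0"
  shows "ennreal (a / M) \<le> X"
proof (cases X)
  case (real x)
  with assms have "ennreal a \<le> ennreal (M * x)" by (simp add: ennreal_mult)
  then have "a \<le> M * x" using real assms by (subst (asm) ennreal_le_iff) auto
  then have "a / M \<le> x" using assms by (simp add: divide_le_eq mult.commute)
  then show ?thesis using real by (auto intro!: ennreal_leI)
qed simp

lemma shell_G:
  fixes A :: "'a::euclidean_space set"
  assumes [measurable]: "A \<in> sets borel" and A1: "emeasure lborel A = 1" and R: "R > 0" and m: "m \<ge> 1"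
  defines "V \<equiv> unit_ball_vol DIM('a) * (R ^ DIM('a) - (R/2) ^ DIM('a))"
  shows "ennreal ((V - 1) / real m ^ (DIM('a) + 1)) \<le> (\<integral>\<^sup>+h. Fo A (-A) h * indicator (Sh (R / real m)) h \<partial>lborel)"
proof -
  let ?G = "Fo A (-A)" and ?P = "Fo A A"
  let ?X = "\<integral>\<^sup>+h. ?G h * indicator (Sh (R / real m)) h \<partial>lborel"
  have "ennreal V = emeasure lborel (Sh R :: 'a set)"
    unfolding V_def using R by (simp add: emeasure_Sh)
  also have "\<dots> = (\<integral>\<^sup>+(h::'a). indicator (Sh R) h \<partial>lborel)" by simp
  also have "\<dots> = (\<integral>\<^sup>+h. ?G h * indicator (Sh R) h + ?P h * indicator (Sh R) h \<partial>lborel)"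
  proof (rule nn_integral_cong)
    fix h :: 'a
    have "?G h * indicator (Sh R) h + ?P h * indicator (Sh R) h = (?G h + ?P h) * indicator (Sh R) h"
      by (simp add: distrib_right)
    also have "\<dots> = indicator (Sh R) h" using Fo_GP[of A h] A1 by simp
    finally show "indicator (Sh R) h = ?G h * indicator (Sh R) h + ?P h * indicator (Sh R) h" by simp
  qed
  also have "\<dots> = (\<integral>\<^sup>+h. ?G h * indicator (Sh R) h \<partial>lborel) + (\<integral>\<^sup>+h. ?P h * indicator (Sh R) h \<partial>lborel)"
    by (rule nn_integral_add) measurable
  also have "(\<integral>\<^sup>+h. ?P h * indicator (Sh R) h \<partial>lborel) \<le> (\<integral>\<^sup>+h. ?P h \<partial>lborel)"
    by (rule nn_integral_mono) (auto split: split_indicator)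
  also have "(\<integral>\<^sup>+h. ?P h \<partial>lborel) = 1" using Fo_P_total[of A] A1 by simp
  finally have 1: "ennreal V \<le> (\<integral>\<^sup>+h. ?G h * indicator (Sh R) h \<partial>lborel) + ennreal 1"
    by (simp add: add_left_mono)
  have mpos: "real m > 0" using m by simp
  have "(\<integral>\<^sup>+h. ?G h * indicator (Sh R) h \<partial>lborel) =
      ennreal (\<bar>real m\<bar> ^ DIM('a)) * (\<integral>\<^sup>+x. ?G (0 + real m *\<^sub>R x) * indicator (Sh R) (0 + real m *\<^sub>R x) \<partial>lborel)"
    by (rule nn_integral_lborel_affine) (measurable, use mpos in simp)
  also have "(\<integral>\<^sup>+x. ?G (0 + real m *\<^sub>R x) * indicator (Sh R) (0 + real m *\<^sub>R x) \<partial>lborel) \<le>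
      (\<integral>\<^sup>+x. of_nat m * (?G x * indicator (Sh (R / real m)) x) \<partial>lborel)"
  proof (rule nn_integral_mono)
    fix x :: 'a
    have "?G (0 + real m *\<^sub>R x) * indicator (Sh R) (0 + real m *\<^sub>R x) = ?G (real m *\<^sub>R x) * indicator (Sh (R / real m)) x"
      using Sh_scale[OF mpos, of R x] by simp
    also have "\<dots> \<le> of_nat m * ?G x * indicator (Sh (R / real m)) x"
      by (intro mult_right_mono Fo_mult) auto
    finally show "?G (0 + real m *\<^sub>R x) * indicator (Sh R) (0 + real m *\<^sub>R x) \<le> of_nat m * (?G x * indicator (Sh (R / real m)) x)"
      by (simp add: mult.assoc)
  qed
  also have "(\<integral>\<^sup>+x. of_nat m * (?G x * indicator (Sh (R / real m)) x) \<partial>lborel) = of_nat m * ?X"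
    by (rule nn_integral_cmult) measurable
  finally have 2: "(\<integral>\<^sup>+h. ?G h * indicator (Sh R) h \<partial>lborel) \<le> ennreal (real m ^ DIM('a)) * (of_nat m * ?X)"
    by (simp add: mult_left_mono)
  also have "\<dots> = ennreal (real m ^ (DIM('a) + 1)) * ?X"
    by (simp add: ennreal_of_nat_eq_real_of_nat ennreal_mult[symmetric] mult.assoc[symmetric] mult.commute)
  finally have 3: "ennreal (V - 1) \<le> ennreal (real m ^ (DIM('a) + 1)) * ?X"
    using 1 by (intro ennreal_ge_aux) (auto intro: order_trans add_right_mono)
  show ?thesis by (rule ennreal_div_aux[OF 3]) (use mpos in simp)
qed


lemma real_ident_aux:
  assumes "R > 0" "M > 0"
  shows "1 / (R / M) powr p * (V / (4 * M ^ (n + 1))) = V / (4 * R powr p) * M powr (p - real n - 1)"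
proof -
  have a: "M ^ (n + 1) = M powr (real n + 1)" using assms by (simp add: powr_add powr_realpow)
  have b: "M powr (p - real n - 1) = M powr p / M powr (real n + 1)"
    by (simp add: powr_diff[symmetric] algebra_simps)
  show ?thesis using assms unfolding a b by (simp add: powr_divide field_simps)
qed

lemma Sh_kernel:
  assumes "h \<in> Sh r" "p \<ge> 0"
  shows "1 / r powr p \<le> 1 / norm h powr p"
proof -
  from assms have h: "norm h \<le> r" "r/2 < norm h" by (auto simp: Sh_def)
  then have "norm h > 0" using norm_ge_zero[of h] by linarith
  then have "norm h powr p \<le> r powr p" using h assms by (intro powr_mono2) auto
  moreover have "norm h powr p > 0" using \<open>norm h > 0\<close> by simp
  moreover have "r powr p > 0" using \<open>norm h > 0\<close> h by simp
  ultimately show ?thesis by (intro divide_left_mono) auto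
qed

lemma term_bound:
  fixes A B :: "'a::euclidean_space set"
  assumes [measurable]: "A \<in> sets borel" "B \<in> sets borel"
    and A1: "emeasure lborel A = 1" and B: "emeasure lborel B \<le> ennreal b" and b: "b \<ge> 0"
    and R: "R > 0" and m: "m \<ge> 1" and p: "p \<ge> 0"
    and Vge: "unit_ball_vol DIM('a) * (R ^ DIM('a) - (R/2) ^ DIM('a)) \<ge> 2"
    and bm: "4 * b * real m \<le> 1"
  shows "ennreal (unit_ball_vol DIM('a) * (R ^ DIM('a) - (R/2) ^ DIM('a)) / (4 * R powr p) * real m powr (p - DIM('a) - 1)) \<le>
    (\<integral>\<^sup>+h. ennreal (1 / norm h powr p) * Fo A (UNIV - (A \<union> B)) h * indicator (Sh (R / real m)) h \<partial>lborel)"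
proof -
  define V where "V = unit_ball_vol DIM('a) * (R ^ DIM('a) - (R/2) ^ DIM('a))"
  define n where "n = DIM('a)"
  define r where "r = R / real m"
  let ?F = "Fo A (UNIV - (A \<union> B))"
  let ?X = "\<integral>\<^sup>+h. ?F h * indicator (Sh r) h \<partial>lborel"
  have mpos: "real m > 0" using m by simp
  have V: "V \<ge> 2" using Vge by (simp add: V_def)
  have r0: "r > 0" using R mpos by (simp add: r_def)
  have eSh: "emeasure lborel (Sh r :: 'a set) = ennreal (V / real m ^ n)"
  proof -
    have "unit_ball_vol DIM('a) * (r ^ DIM('a) - (r/2) ^ DIM('a)) = V / real m ^ n"
      unfolding V_def n_def r_def using mpos by (simp add: power_divide field_simps)
    then show ?thesis using r0 by (simp add: emeasure_Sh)
  qed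
  have "ennreal ((V - 1) / real m ^ (n + 1)) \<le> (\<integral>\<^sup>+h. Fo A (-A) h * indicator (Sh r) h \<partial>lborel)"
    unfolding V_def n_def r_def by (rule shell_G) (use A1 R m in auto)
  also have "\<dots> \<le> (\<integral>\<^sup>+h. ?F h * indicator (Sh r) h + ennreal b * indicator (Sh r) h \<partial>lborel)"
  proof (rule nn_integral_mono)
    fix h :: 'a
    have "Fo A (-A) h \<le> ?F h + ennreal b" using Fo_GF[of A B h] B by (auto intro: order_trans add_left_mono)
    then have "Fo A (-A) h * indicator (Sh r) h \<le> (?F h + ennreal b) * indicator (Sh r) h"
      by (rule mult_right_mono) simp
    then show "Fo A (-A) h * indicator (Sh r) h \<le> ?F h * indicator (Sh r) h + ennreal b * indicator (Sh r) h"
      by (simp add: distrib_right)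
  qed
  also have "\<dots> = ?X + (\<integral>\<^sup>+(h::'a). ennreal b * indicator (Sh r) h \<partial>lborel)"
    by (rule nn_integral_add) measurable
  also have "(\<integral>\<^sup>+(h::'a). ennreal b * indicator (Sh r) h \<partial>lborel) = ennreal (b * (V / real m ^ n))"
    using eSh b V mpos by (simp add: nn_integral_cmult ennreal_mult[symmetric])
  finally have "ennreal ((V - 1) / real m ^ (n + 1) - b * (V / real m ^ n)) \<le> ?X"
    by (rule ennreal_ge_aux) (use b V mpos in \<open>auto simp: V_def\<close>)
  moreover have "V / (4 * real m ^ (n + 1)) \<le> (V - 1) / real m ^ (n + 1) - b * (V / real m ^ n)"
  proof -
    have "b * (V / real m ^ n) = (b * real m) * V / real m ^ (n + 1)"
      using mpos by (simp add: field_simps)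
    also have "\<dots> \<le> (1/4) * V / real m ^ (n + 1)"
      using bm V mpos unfolding V_def by (intro divide_right_mono mult_right_mono) auto
    finally have "b * (V / real m ^ n) \<le> (1/4) * V / real m ^ (n + 1)" .
    moreover have "V / (4 * real m ^ (n + 1)) + (1/4) * V / real m ^ (n + 1) \<le> (V - 1) / real m ^ (n + 1)"
      using V mpos unfolding V_def[symmetric] by (simp add: field_simps)
    ultimately show ?thesis by linarith
  qed
  ultimately have X: "ennreal (V / (4 * real m ^ (n + 1))) \<le> ?X"
    by (meson ennreal_leI order_trans)
  have "ennreal (V / (4 * R powr p) * real m powr (p - n - 1)) = ennreal (1 / r powr p) * ennreal (V / (4 * real m ^ (n + 1)))"
    unfolding r_def using real_ident_aux[OF R mpos, of p V n] R mpos V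
    by (subst ennreal_mult[symmetric]) (auto simp: V_def)
  also have "\<dots> \<le> ennreal (1 / r powr p) * ?X" using X by (rule mult_left_mono) simp
  also have "\<dots> = (\<integral>\<^sup>+h. ennreal (1 / r powr p) * (?F h * indicator (Sh r) h) \<partial>lborel)"
    by (rule nn_integral_cmult[symmetric]) measurable
  also have "\<dots> \<le> (\<integral>\<^sup>+h. ennreal (1 / norm h powr p) * ?F h * indicator (Sh r) h \<partial>lborel)"
  proof (rule nn_integral_mono)
    fix h :: 'a
    show "ennreal (1 / r powr p) * (?F h * indicator (Sh r) h) \<le> ennreal (1 / norm h powr p) * ?F h * indicator (Sh r) h"
    proof (cases "h \<in> Sh r")
      case True
      have "ennreal (1 / r powr p) \<le> ennreal (1 / norm h powr p)"
        by (intro ennreal_leI Sh_kernel[OF True p])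
      then show ?thesis using True by (simp add: mult_right_mono)
    qed simp
  qed
  finally show ?thesis unfolding V_def n_def r_def .
qed


lemma Sh_disj:
  assumes R: "R > 0"
  shows "disjoint_family (\<lambda>k::nat. Sh (R / 2 ^ k) :: 'a::euclidean_space set)"
proof -
  have *: "Sh (R / 2 ^ k) \<inter> Sh (R / 2 ^ l) = ({} :: 'a set)" if "k < l" for k l :: nat
  proof -
    have "(2::real) ^ (k + 1) \<le> 2 ^ l" using that by (intro power_increasing) auto
    then have "R / 2 ^ l \<le> (R / 2 ^ k) / 2" using R by (simp add: field_simps)
    then show ?thesis unfolding Sh_def by auto
  qed
  show ?thesis unfolding disjoint_family_on_def
  proof (intro ballI impI)
    fix k l :: nat assume "k \<noteq> l"
    then show "Sh (R / 2 ^ k) \<inter> Sh (R / 2 ^ l) = ({} :: 'a set)"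
      using *[of k l] *[of l k] by (cases "k < l") (auto simp: Int_commute)
  qed
qed

lemma borel_main:
  fixes A B :: "'a::euclidean_space set"
  assumes [measurable]: "A \<in> sets borel" "B \<in> sets borel"
    and A1: "emeasure lborel A = 1" and B: "emeasure lborel B \<le> ennreal b" and b: "b \<ge> 0"
    and R: "R > 0" and p: "p \<ge> 0"
    and Vge: "unit_ball_vol DIM('a) * (R ^ DIM('a) - (R/2) ^ DIM('a)) \<ge> 2"
    and N: "\<And>k. k < N \<Longrightarrow> 4 * b * 2 ^ k \<le> 1"
  shows "(\<Sum>k<N. ennreal (unit_ball_vol DIM('a) * (R ^ DIM('a) - (R/2) ^ DIM('a)) / (4 * R powr p) * (2 ^ k) powr (p - DIM('a) - 1)))
     \<le> Lb p A (UNIV - (A \<union> B))"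
proof -
  let ?D = "UNIV - (A \<union> B)"
  let ?f = "\<lambda>h. ennreal (1 / norm h powr p) * Fo A ?D h"
  have "(\<Sum>k<N. ennreal (unit_ball_vol DIM('a) * (R ^ DIM('a) - (R/2) ^ DIM('a)) / (4 * R powr p) * (2 ^ k) powr (p - DIM('a) - 1)))
      \<le> (\<Sum>k<N. (\<integral>\<^sup>+h. ?f h * indicator (Sh (R / 2 ^ k)) h \<partial>lborel))"
  proof (rule sum_mono)
    fix k assume "k \<in> {..<N}"
    then have k: "4 * b * real (2 ^ k) \<le> 1" using N by simp
    show "ennreal (unit_ball_vol DIM('a) * (R ^ DIM('a) - (R/2) ^ DIM('a)) / (4 * R powr p) * (2 ^ k) powr (p - DIM('a) - 1))
      \<le> (\<integral>\<^sup>+h. ?f h * indicator (Sh (R / 2 ^ k)) h \<partial>lborel)"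
      using term_bound[of A B b R "2 ^ k" p, OF assms(1,2) A1 B b R _ p Vge k] by simp
  qed
  also have "\<dots> \<le> (\<Sum>k. (\<integral>\<^sup>+h. ?f h * indicator (Sh (R / 2 ^ k)) h \<partial>lborel))"
    by (rule sum_le_suminf) auto
  also have "\<dots> = (\<integral>\<^sup>+h \<in> (\<Union>k. Sh (R / 2 ^ k)). ?f h \<partial>lborel)"
    by (rule nn_integral_disjoint_family[symmetric]) (use Sh_disj[OF R] in auto)
  also have "\<dots> \<le> (\<integral>\<^sup>+h. ?f h \<partial>lborel)"
    by (rule nn_integral_mono) (auto split: split_indicator)
  also have "\<dots> = Lb p A ?D" by (rule Lb_eq[symmetric]) auto
  finally show ?thesis .
qed


lemma exists_R:
  "\<exists>R>0. unit_ball_vol DIM('a::euclidean_space) * (R ^ DIM('a) - (R/2) ^ DIM('a)) \<ge> 2"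
proof -
  define w where "w = unit_ball_vol DIM('a)"
  define n where "n = DIM('a)"
  have w: "w > 0" unfolding w_def by simp
  have n: "n \<ge> 1" unfolding n_def by (simp add: DIM_positive Suc_leI)
  define R where "R = max 1 (4 / w)"
  have R1: "R \<ge> 1" unfolding R_def by simp
  have "R ^ n \<ge> R ^ 1" using R1 n by (intro power_increasing) auto
  then have Rn: "R ^ n \<ge> 4 / w" unfolding R_def by simp
  have "(R/2) ^ n = R ^ n / 2 ^ n" by (simp add: power_divide)
  also have "\<dots> \<le> R ^ n / 2 ^ 1" using n R1 by (intro divide_left_mono power_increasing) auto
  finally have "R ^ n - (R/2) ^ n \<ge> R ^ n / 2" by simp
  then have "w * (R ^ n - (R/2) ^ n) \<ge> w * (R ^ n / 2)" using w by (intro mult_left_mono) auto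
  moreover have "w * (R ^ n / 2) \<ge> 2" using Rn w by (simp add: field_simps)
  ultimately have "w * (R ^ n - (R/2) ^ n) \<ge> 2" by linarith
  then show ?thesis using R1 unfolding w_def n_def by (intro exI[of _ R]) auto
qed

lemma exists_N:
  fixes x :: real assumes "x \<ge> 1"
  shows "\<exists>N\<ge>1. 2 ^ (N - 1) \<le> x \<and> x < 2 ^ N"
proof -
  obtain N0 where "x < 2 ^ N0" using real_arch_pow[of 2 x] by auto
  define N where "N = (LEAST N. x < (2::real) ^ N)"
  have N: "x < 2 ^ N" unfolding N_def by (rule LeastI) fact
  have "N \<noteq> 0"
  proof
    assume "N = 0" with N assms show False by simp
  qed
  moreover have "\<not> x < 2 ^ (N - 1)" unfolding N_def
    by (rule not_less_Least) (use \<open>N \<noteq> 0\<close> in \<open>simp add: N_def\<close>)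
  ultimately show ?thesis using N by (intro exI[of _ N]) auto
qed

lemma Linfty:
  fixes L :: ennreal
  assumes c: "c > 0" and "\<And>N::nat. ennreal (real N * c) \<le> L"
  shows "L = \<infinity>"
proof (rule ccontr)
  assume "L \<noteq> \<infinity>"
  then obtain l where l: "L = ennreal l" "l \<ge> 0" by (cases L) auto
  obtain N :: nat where "l / c < real N" using reals_Archimedean2 by blast
  then have "l < real N * c" using c by (simp add: field_simps)
  moreover have "real N * c \<le> l" using assms(2)[of N] l c by (simp add: ennreal_le_iff)
  ultimately show False by simp
qed


lemma final_borel:
  fixes A B :: "'a::euclidean_space set"
  assumes s0: "0 < s" and s1: "s < 1" and R: "R > 0"
    and Vge: "unit_ball_vol DIM('a) * (R ^ DIM('a) - (R/2) ^ DIM('a)) \<ge> 2"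
    and [measurable]: "A \<in> sets borel" "B \<in> sets borel"
    and A1: "emeasure lborel A = 1"
    and Bd: "emeasure lborel B \<le> ennreal (min (1/20) (unit_ball_vol DIM('a) * (R ^ DIM('a) - (R/2) ^ DIM('a)) / (4 * R powr (real DIM('a) + 2 * s)) / 24))"
  shows "lower_bound s (min (1/20) (unit_ball_vol DIM('a) * (R ^ DIM('a) - (R/2) ^ DIM('a)) / (4 * R powr (real DIM('a) + 2 * s)) / 24)) (emeasure lborel B)
     \<le> Lb (real DIM('a) + 2 * s) A (UNIV - (A \<union> B))"
proof -
  define V where "V = unit_ball_vol DIM('a) * (R ^ DIM('a) - (R/2) ^ DIM('a))"
  define p where "p = real DIM('a) + 2 * s"
  define c0 where "c0 = V / (4 * R powr p)"
  define \<delta> where "\<delta> = min (1/20) (c0 / 24)"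
  define L where "L = Lb p A (UNIV - (A \<union> B))"
  have V: "V \<ge> 2" using Vge by (simp add: V_def)
  have c0: "c0 > 0" using V R unfolding c0_def by simp
  have d0: "\<delta> > 0" "\<delta> \<le> 1/20" "\<delta> \<le> c0 / 24" using c0 unfolding \<delta>_def by auto
  have p: "p \<ge> 0" using s0 by (simp add: p_def)
  have main: "(\<Sum>k<N. ennreal (c0 * (2 ^ k) powr (2 * s - 1))) \<le> L"
    if b: "b \<ge> 0" "emeasure lborel B \<le> ennreal b" and N: "\<And>k. k < N \<Longrightarrow> 4 * b * 2 ^ k \<le> 1" for b N
  proof -
    have "(\<Sum>k<N. ennreal (V / (4 * R powr p) * (2 ^ k) powr (p - DIM('a) - 1))) \<le> L"
      unfolding L_def V_def by (rule borel_main) (use assms b N p in \<open>auto simp: V_def\<close>)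
    moreover have "p - DIM('a) - 1 = 2 * s - 1" by (simp add: p_def)
    ultimately show ?thesis by (simp add: c0_def)
  qed
  have goal: "lower_bound s \<delta> (emeasure lborel B) \<le> L"
  proof (cases "s < 1/2")
    case True
    have "(\<Sum>k<1. ennreal (c0 * (2 ^ k) powr (2 * s - 1))) \<le> L"
      by (rule main[of \<delta>]) (use d0 Bd in \<open>auto simp: \<delta>_def c0_def V_def p_def\<close>)
    then have "ennreal c0 \<le> L" by simp
    moreover have "ennreal \<delta> \<le> ennreal c0" using d0 c0 by (intro ennreal_leI) linarith
    ultimately show ?thesis using True by (simp add: lower_bound_def)
  next
    case False
    note sge = False
    show ?thesis
    proof (cases "emeasure lborel B = 0")
      case True
      have "L = \<infinity>"
      proof (rule Linfty[OF c0])
        fix N :: nat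
        have "ennreal (real N * c0) = (\<Sum>k<N. ennreal c0)"
          using c0 by (simp add: ennreal_of_nat_eq_real_of_nat ennreal_mult)
        also have "\<dots> \<le> (\<Sum>k<N. ennreal (c0 * (2 ^ k) powr (2 * s - 1)))"
        proof (rule sum_mono)
          fix k assume "k \<in> {..<N}"
          have "1 \<le> ((2::real) ^ k) powr (2 * s - 1)"
            using sge by (intro ge_one_powr_ge_zero) auto
          then have "c0 * 1 \<le> c0 * (2 ^ k) powr (2 * s - 1)" using c0 by (intro mult_left_mono) auto
          then show "ennreal c0 \<le> ennreal (c0 * (2 ^ k) powr (2 * s - 1))" by (intro ennreal_leI) simp
        qed
        also have "\<dots> \<le> L" by (rule main[of 0]) (use True in auto)
        finally show "ennreal (real N * c0) \<le> L" .
      qed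
      then show ?thesis by simp
    next
      case False
      define b0 where "b0 = enn2real (emeasure lborel B)"
      have Bfin: "emeasure lborel B = ennreal b0"
      proof -
        have "emeasure lborel B < \<infinity>" using Bd by (rule le_less_trans) simp
        then show ?thesis unfolding b0_def by (intro ennreal_enn2real[symmetric]) auto
      qed
      have Bd': "emeasure lborel B \<le> ennreal \<delta>" using Bd unfolding \<delta>_def c0_def V_def p_def .
      have b0ge: "b0 \<ge> 0" unfolding b0_def by simp
      have b0ne: "b0 \<noteq> 0" using False Bfin by auto
      have b0le: "b0 \<le> \<delta>" using Bd' d0(1) unfolding Bfin by (subst (asm) ennreal_le_iff) auto
      have b0: "b0 > 0" "b0 \<le> \<delta>" using b0ge b0ne b0le by auto
      have x1: "1 / (4 * b0) \<ge> 1" using b0 d0 by (simp add: field_simps)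
      obtain N where N: "N \<ge> 1" "2 ^ (N - 1) \<le> 1 / (4 * b0)" "1 / (4 * b0) < 2 ^ N"
        using exists_N[OF x1] by auto
      have Nk: "4 * b0 * 2 ^ k \<le> 1" if "k < N" for k
      proof -
        have "(2::real) ^ k \<le> 2 ^ (N - 1)" using that by (intro power_increasing) auto
        then have "(2::real) ^ k \<le> 1 / (4 * b0)" using N by linarith
        then show ?thesis using b0 by (simp add: field_simps)
      qed
      have S: "(\<Sum>k<N. ennreal (c0 * (2 ^ k) powr (2 * s - 1))) \<le> L"
        by (rule main[of b0]) (use b0 Bfin Nk in auto)
      show ?thesis
      proof (cases "s = 1/2")
        case True
        have e: "2 * s - 1 = 0" using True by simp
        have "(\<Sum>k<N. ennreal (c0 * (2 ^ k) powr (2 * s - 1))) = (\<Sum>k<N. ennreal c0)"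
          by (simp add: e)
        also have "\<dots> = ennreal (real N * c0)"
          using c0 by (simp add: ennreal_of_nat_eq_real_of_nat ennreal_mult)
        finally have "(\<Sum>k<N. ennreal (c0 * (2 ^ k) powr (2 * s - 1))) = ennreal (real N * c0)" .
        with S have LN: "ennreal (real N * c0) \<le> L" by simp
        have "1 / b0 < 2 ^ (N + 2)" using N b0 by (simp add: field_simps)
        then have "ln (1 / b0) < ln (2 ^ (N + 2))" using b0 by (intro ln_less_cancel_iff[THEN iffD2]) auto
        also have "\<dots> = real (N + 2) * ln 2" by (rule ln_realpow) 

        also have "\<dots> \<le> real (N + 2) * 1" using ln_2_less_1 by (intro mult_left_mono) auto
        finally have lnb: "ln (1 / b0) \<le> 3 * real N" using N by simp
        have lnpos: "ln (1 / b0) \<ge> 0" using b0 d0 by simp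
        have "\<delta> * ln (1 / b0) \<le> (c0 / 3) * (3 * real N)"
          using lnb lnpos d0 c0 by (intro mult_mono) auto
        then have "ennreal (\<delta> * ln (1 / enn2real (emeasure lborel B))) \<le> ennreal (real N * c0)"
          using Bfin b0 by (intro ennreal_leI) (simp add: mult.commute)
        then show ?thesis using True False LN by (simp add: lower_bound_def)
      next
        case s12: False
        have sgt: "s > 1/2" using sge s12 by simp
        have "ennreal (c0 * (2 ^ (N - 1)) powr (2 * s - 1)) \<le> (\<Sum>k<N. ennreal (c0 * (2 ^ k) powr (2 * s - 1)))"
          by (rule member_le_sum) (use N in auto)
        with S have LN: "ennreal (c0 * (2 ^ (N - 1)) powr (2 * s - 1)) \<le> L" by simp
        have "(2::real) ^ N = 2 * 2 ^ (N - 1)" using N by (cases N) auto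
        then have lo: "1 / (8 * b0) \<le> 2 ^ (N - 1)" using N b0 by (simp add: field_simps)
        have "(1 / (8 * b0)) powr (2 * s - 1) \<le> ((2::real) ^ (N - 1)) powr (2 * s - 1)"
          using lo sgt b0 by (intro powr_mono2) auto
        moreover have "(1 / (8 * b0)) powr (2 * s - 1) = 8 powr (1 - 2 * s) * b0 powr (1 - 2 * s)"
        proof -
          have "(1 / (8 * b0)) powr (2 * s - 1) = 1 / (8 * b0) powr (2 * s - 1)"
            using b0 by (simp add: powr_divide)
          also have "\<dots> = (8 * b0) powr (- (2 * s - 1))"
            by (rule powr_minus_divide[symmetric])
          also have "\<dots> = 8 powr (1 - 2 * s) * b0 powr (1 - 2 * s)"
            using b0 by (simp add: powr_mult)
          finally show ?thesis .
        qed
        ultimately have t: "8 powr (1 - 2 * s) * b0 powr (1 - 2 * s) \<le> (2 ^ (N - 1)) powr (2 * s - 1)" by simp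
        have "(8::real) powr (- 1) \<le> 8 powr (1 - 2 * s)" using s1 by (intro powr_mono) auto
        then have e8: "1/8 \<le> (8::real) powr (1 - 2 * s)" by (simp add: powr_minus_divide)
        have "c0 * (1/8) \<le> c0 * 8 powr (1 - 2 * s)" using e8 c0 by (intro mult_left_mono) auto
        then have "\<delta> \<le> c0 * 8 powr (1 - 2 * s)" using d0 c0 by linarith
        then have "\<delta> * b0 powr (1 - 2 * s) \<le> c0 * 8 powr (1 - 2 * s) * b0 powr (1 - 2 * s)"
          by (intro mult_right_mono) auto
        also have "\<dots> \<le> c0 * (2 ^ (N - 1)) powr (2 * s - 1)"
          using t c0 by (simp add: mult.assoc mult_left_mono)
        finally have "ennreal (\<delta> * enn2real (emeasure lborel B) powr (1 - 2 * s)) \<le> ennreal (c0 * (2 ^ (N - 1)) powr (2 * s - 1))"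
          using Bfin b0 by (intro ennreal_leI) simp
        then show ?thesis using sge s12 False LN by (simp add: lower_bound_def)
      qed
    qed
  qed
  then show ?thesis unfolding \<delta>_def c0_def V_def p_def L_def .
qed


lemma reduction:
  fixes A B :: "(real^'n) set"
  assumes A: "A \<in> sets lebesgue" and B: "B \<in> sets lebesgue" and AB: "A \<inter> B = {}"
    and A1: "emeasure lebesgue A = 1"
  obtains A0 B0 :: "(real^'n) set" where "A0 \<in> sets borel" "B0 \<in> sets borel" "emeasure lborel A0 = 1"
    "emeasure lborel B0 = emeasure lebesgue B"
    "Lb (real CARD('n) + 2 * s) A0 (UNIV - (A0 \<union> B0)) \<le> Lint s A (UNIV - (A \<union> B))"
proof -
  define A0 where "A0 = main_part lborel A"
  have A0s: "A0 \<in> sets lborel" unfolding A0_def by (rule main_part_sets[OF A])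
  have A0A: "A0 \<subseteq> A" unfolding A0_def using main_part_null_part_Un[OF A] by blast
  have mA0: "emeasure lborel A0 = 1" unfolding A0_def using emeasure_completion[OF A] A1 by simp
  have ABs: "A \<union> B \<in> sets lebesgue" using A B by simp
  obtain C where C: "C \<in> sets lborel" "A \<union> B \<subseteq> C" "emeasure lebesgue (A \<union> B) = emeasure lborel C"
    using completion_upper[OF ABs] by blast
  define B0 where "B0 = C - A0"
  have B0s: "B0 \<in> sets lborel" unfolding B0_def using C A0s by auto
  have U: "A0 \<union> B0 = C" unfolding B0_def using A0A C by auto
  have "emeasure lborel C = emeasure lborel A0 + emeasure lborel B0"
    unfolding U[symmetric] using A0s B0s by (intro plus_emeasure[symmetric]) (auto simp: B0_def)
  moreover have "emeasure lebesgue (A \<union> B) = emeasure lebesgue A + emeasure lebesgue B"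
    using A B AB by (intro plus_emeasure[symmetric]) auto
  ultimately have "1 + emeasure lborel B0 = 1 + emeasure lebesgue B"
    using C(3) mA0 A1 by simp
  then have mB0: "emeasure lborel B0 = emeasure lebesgue B"
    by (subst (asm) ennreal_add_left_cancel) simp
  have L: "Lb (real CARD('n) + 2 * s) A0 (UNIV - (A0 \<union> B0)) \<le> Lint s A (UNIV - (A \<union> B))"
    unfolding Lb_def Lint_def nn_integral_completion U
  proof (intro nn_integral_mono)
    fix x y :: "real^'n"
    have "indicator A0 x \<le> (indicator A x :: ennreal)" using A0A by (auto split: split_indicator)
    moreover have "indicator (UNIV - C) y \<le> (indicator (UNIV - (A \<union> B)) y :: ennreal)"
      using C by (auto split: split_indicator)
    ultimately show "indicator A0 x * indicator (UNIV - C) y * ennreal (1 / norm (x - y) powr (real CARD('n) + 2 * s))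
      \<le> indicator A x * indicator (UNIV - (A \<union> B)) y * ennreal (1 / norm (x - y) powr (real CARD('n) + 2 * s))"
      by (intro mult_mono) auto
  qed
  show ?thesis
    by (rule that[of A0 B0]) (use A0s B0s mA0 mB0 L in auto)
qed


theorem lemma4p2:
  fixes s :: real
  assumes "0 < s" and "s < 1"
  shows "\<exists>\<delta>::real. 0 < \<delta> \<and> \<delta> < 1/10 \<and>
    (\<forall>A B :: (real^'n) set.
       A \<in> sets lebesgue \<longrightarrow> B \<in> sets lebesgue \<longrightarrow> A \<inter> B = {} \<longrightarrow>
       emeasure lebesgue A = 1 \<longrightarrow> emeasure lebesgue B \<le> ennreal \<delta> \<longrightarrow>
       Lint s A (UNIV - (A \<union> B)) \<ge> lower_bound s \<delta> (emeasure lebesgue B))"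
proof -
  obtain R where R: "R > 0" "unit_ball_vol DIM(real^'n) * (R ^ DIM(real^'n) - (R/2) ^ DIM(real^'n)) \<ge> 2"
    using exists_R[where 'a="real^'n"] by blast
  define V where "V = unit_ball_vol DIM(real^'n) * (R ^ DIM(real^'n) - (R/2) ^ DIM(real^'n))"
  define \<delta> where "\<delta> = min (1/20) (V / (4 * R powr (real DIM(real^'n) + 2 * s)) / 24)"
  have V: "V \<ge> 2" using R by (simp add: V_def)
  have d: "0 < \<delta>" "\<delta> < 1/10" using V R unfolding \<delta>_def by auto
  show ?thesis
  proof (intro exI[of _ \<delta>] conjI allI impI d)
    fix A B :: "(real^'n) set"
    assume A: "A \<in> sets lebesgue" and B: "B \<in> sets lebesgue" and AB: "A \<inter> B = {}"
      and A1: "emeasure lebesgue A = 1" and Bd: "emeasure lebesgue B \<le> ennreal \<delta>"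
    obtain A0 B0 :: "(real^'n) set" where H: "A0 \<in> sets borel" "B0 \<in> sets borel" "emeasure lborel A0 = 1"
      "emeasure lborel B0 = emeasure lebesgue B"
      "Lb (real CARD('n) + 2 * s) A0 (UNIV - (A0 \<union> B0)) \<le> Lint s A (UNIV - (A \<union> B))"
      using reduction[OF A B AB A1] by blast
    have "lower_bound s \<delta> (emeasure lborel B0) \<le> Lb (real DIM(real^'n) + 2 * s) A0 (UNIV - (A0 \<union> B0))"
      unfolding \<delta>_def V_def
      by (rule final_borel) (use assms R H Bd in \<open>auto simp: \<delta>_def V_def\<close>)
    then show "lower_bound s \<delta> (emeasure lebesgue B) \<le> Lint s A (UNIV - (A \<union> B))"
      using H(4,5) by simp
  qed
qed

end
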